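(* The function $h$ is a height function, i.e. it satisfies: (A1) $h(L)=0$ if and only if $L=\emptyset$; (A2) if $h(L)<\infty$ and $L'\subseteq L$ then $h(L')\le h(L)$; (A3) if $h(L)<\infty$ and $L'\subseteq L-1$ then $h(L')\le h(L)$; (A4) if $h(L),h(L')\le s<\infty$, then $h(L'\cap L)\le s-1$ or $h(L'\cap(L-1))\le s-1$; for all finite $L,L'\subseteq\mathbb{N}$ and integers $s$.
   Context: $\mathbb{N}=\{0,1,2,\ldots\}$. For a finite $L\subseteq\mathbb{N}$ and an integer $r$, write $L+r:=\{x+r: x\in L,\ x+r\ge 0\}$. Define $h$ on finite subsets of $\mathbb{N}$ recursively on $|L|$: $h(\emptyset)=0$, and for $L\neq\emptyset$, $$h(L)=1+\max\Big\{h(L\cap(L+1)),\ \max_{M\in T(L)}\min\{h(L\cap M),\,h(L\cap(M-1))\}\Big\},$$ where $T(L)$ is the set of all finite $M\subseteq\mathbb{N}$ with $M\notin\{L,L+1\}$ and $0<|M|\le|L|$. *)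

theory Defs
  imports Main
begin

definition shift :: "nat set \<Rightarrow> int \<Rightarrow> nat set" where
  "shift L r = {nat (int x + r) | x. x \<in> L \<and> int x + r \<ge> 0}"

lemma mem_shift: "y \<in> shift L r \<longleftrightarrow> (\<exists>x\<in>L. int x + r \<ge> 0 \<and> y = nat (int x + r))"
  unfolding shift_def by blast

definition Tset :: "nat set \<Rightarrow> nat set set" where
  "Tset L = {M. finite M \<and> M \<noteq> L \<and> M \<noteq> shift L 1 \<and> 0 < card M \<and> card M \<le> card L}"

lemma card_inter_shift1_less:
  assumes "finite L" "L \<noteq> {}"
  shows "card (L \<inter> shift L 1) < card L"
proof -
  have "Min L \<in> L" using assms by simp
  moreover have "Min L \<notin> shift L 1"
  proof
    assume "Min L \<in> shift L 1"
    then obtain x where "x \<in> L" and mx: "Min L = nat (int x + 1)" unfolding mem_shift by blast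
    have "nat (int x + 1) = Suc x" by simp
    with mx have "Min L = Suc x" by (rule trans)
    moreover have "Min L \<le> x" by (rule Min_le[OF assms(1) \<open>x \<in> L\<close>])
    ultimately show False by simp
  qed
  ultimately have "L \<inter> shift L 1 \<noteq> L" by blast
  then have "L \<inter> shift L 1 \<subset> L" by blast
  then show ?thesis by (rule psubset_card_mono[OF assms(1)])
qed

lemma card_inter_T_less:
  assumes "finite L" "M \<in> Tset L"
  shows "card (L \<inter> M) < card L"
proof (rule psubset_card_mono[OF assms(1)])
  show "L \<inter> M \<subset> L"
  proof
    show "L \<inter> M \<subseteq> L" by auto
    show "L \<inter> M \<noteq> L"
    proof
      assume "L \<inter> M = L"
      then have "L \<subseteq> M" by auto
      moreover have "finite M" "card M \<le> card L" "M \<noteq> L" using assms(2) by (auto simp: Tset_def)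
      ultimately have "L = M" using card_seteq[of M L] by simp
      with \<open>M \<noteq> L\<close> show False by simp
    qed
  qed
qed

lemma shift_pm1: "shift (shift L (-1)) 1 \<subseteq> L"
  by (auto simp: shift_def)

lemma card_shift1: "finite L \<Longrightarrow> card (shift L 1) = card L"
proof -
  assume "finite L"
  have e: "\<And>x::nat. nat (int x + 1) = Suc x" by simp
  have "shift L 1 = Suc ` L" unfolding shift_def e by auto
  then show ?thesis by (simp add: card_image)
qed

lemma card_inter_Tm1_less:
  assumes "finite L" "M \<in> Tset L"
  shows "card (L \<inter> shift M (-1)) < card L"
proof (rule psubset_card_mono[OF assms(1)])
  show "L \<inter> shift M (-1) \<subset> L"
  proof
    show "L \<inter> shift M (-1) \<subseteq> L" by auto
    show "L \<inter> shift M (-1) \<noteq> L"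
    proof
      assume "L \<inter> shift M (-1) = L"
      then have "L \<subseteq> shift M (-1)" by auto
      have "shift L 1 \<subseteq> M"
      proof
        fix z assume "z \<in> shift L 1"
        then obtain y where y: "y \<in> L" "z = nat (int y + 1)" unfolding mem_shift by blast
        from y(1) \<open>L \<subseteq> shift M (-1)\<close> have "y \<in> shift M (-1)" by blast
        then obtain x where x: "x \<in> M" "y = nat (int x + -1)" "int x + -1 \<ge> 0"
          unfolding mem_shift by blast
        from x(2,3) y(2) have "z = x" by simp
        with x(1) show "z \<in> M" by simp
      qed
      moreover have "finite M" "card M \<le> card L" "M \<noteq> shift L 1" using assms(2) by (auto simp: Tset_def)
      ultimately have "shift L 1 = M" using card_seteq[of M "shift L 1"] card_shift1[OF assms(1)] by simp
      with \<open>M \<noteq> shift L 1\<close> show False by simp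
    qed
  qed
qed

text \<open>The function h, defined by recursion on |L| (only meaningful on finite L;
  on infinite sets it is set to 0 by convention).\<close>
function hgt :: "nat set \<Rightarrow> nat" where
  "hgt L = (if L = {} \<or> infinite L then 0
            else 1 + max (hgt (L \<inter> shift L 1))
                       (Max ((\<lambda>M. min (hgt (L \<inter> M)) (hgt (L \<inter> shift M (-1)))) ` Tset L)))"
  by auto
termination
proof (relation "measure card")
  show "wf (measure card)" by simp
next
  fix L :: "nat set" assume "\<not> (L = {} \<or> infinite L)"
  then show "(L \<inter> shift L 1, L) \<in> measure card"
    unfolding in_measure by (intro card_inter_shift1_less) auto
next
  fix L M :: "nat set" assume "\<not> (L = {} \<or> infinite L)" "M \<in> Tset L"
  then show "(L \<inter> M, L) \<in> measure card"
    unfolding in_measure by (intro card_inter_T_less) auto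
next
  fix L M :: "nat set" assume "\<not> (L = {} \<or> infinite L)" "M \<in> Tset L"
  then show "(L \<inter> shift M (-1), L) \<in> measure card"
    unfolding in_measure by (intro card_inter_Tm1_less) auto
qed

declare hgt.simps[simp del]

end

theory Submission
  imports Defs
begin

lemma shift1: "shift A 1 = Suc ` A"
  unfolding shift_def by force

lemma shiftm1: "shift A (-1) = {x. Suc x \<in> A}"
proof -
  have "shift A (-1) \<subseteq> {x. Suc x \<in> A}"
  proof
    fix y assume "y \<in> shift A (-1)"
    then obtain x where "x \<in> A" "int x + -1 \<ge> 0" "y = nat (int x + -1)" unfolding mem_shift by blast
    then have "Suc y = x" by simp
    with \<open>x \<in> A\<close> show "y \<in> {x. Suc x \<in> A}" by simp
  qed
  moreover have "{x. Suc x \<in> A} \<subseteq> shift A (-1)"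
  proof
    fix y assume "y \<in> {x. Suc x \<in> A}"
    then have "Suc y \<in> A" by simp
    moreover have "int (Suc y) + -1 \<ge> 0" "y = nat (int (Suc y) + -1)" by simp_all
    ultimately show "y \<in> shift A (-1)" unfolding mem_shift by blast
  qed
  ultimately show ?thesis by blast
qed

lemma hgt_empty: "hgt {} = 0"
  by (subst hgt.simps) simp

lemma hgt_unfold:
  "finite L \<Longrightarrow> L \<noteq> {} \<Longrightarrow> hgt L = 1 + max (hgt (L \<inter> Suc ` L))
     (Max ((\<lambda>M. min (hgt (L \<inter> M)) (hgt (L \<inter> {x. Suc x \<in> M}))) ` Tset L))"
  by (subst hgt.simps) (simp add: shift1 shiftm1)

lemma Tset_ne: assumes "finite L" "L \<noteq> {}" shows "Tset L \<noteq> {}"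
proof -
  have "finite (L \<union> Suc ` L)" using assms by simp
  then obtain b where b: "b \<notin> L \<union> Suc ` L" using ex_new_if_finite[OF infinite_UNIV_nat] by blast
  have "card L > 0" using assms by (simp add: card_gt_0_iff)
  then have "{b} \<in> Tset L" using b unfolding Tset_def shift1 by auto
  then show ?thesis by blast
qed

lemma img_fin: assumes "finite L"
  shows "finite ((\<lambda>M. min (hgt (L \<inter> M)) (hgt (L \<inter> {x. Suc x \<in> M}))) ` Tset L)"
proof (rule finite_subset[of _ "hgt ` Pow L"])
  show "finite (hgt ` Pow L)" using assms by simp
  show "(\<lambda>M. min (hgt (L \<inter> M)) (hgt (L \<inter> {x. Suc x \<in> M}))) ` Tset L \<subseteq> hgt ` Pow L"
  proof
    fix y assume "y \<in> (\<lambda>M. min (hgt (L \<inter> M)) (hgt (L \<inter> {x. Suc x \<in> M}))) ` Tset L"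
    then obtain M where y: "y = min (hgt (L \<inter> M)) (hgt (L \<inter> {x. Suc x \<in> M}))" by blast
    have "L \<inter> M \<in> Pow L" "L \<inter> {x. Suc x \<in> M} \<in> Pow L" by auto
    then show "y \<in> hgt ` Pow L" unfolding y min_def by auto
  qed
qed

lemma hgt_ge1: "finite L \<Longrightarrow> L \<noteq> {} \<Longrightarrow> hgt (L \<inter> Suc ` L) < hgt L"
  by (subst (2) hgt_unfold) auto

lemma hgt_ge2: assumes "finite L" "M \<in> Tset L"
  shows "min (hgt (L \<inter> M)) (hgt (L \<inter> {x. Suc x \<in> M})) < hgt L"
proof -
  have "L \<noteq> {}" using assms(2) unfolding Tset_def by auto
  have "min (hgt (L \<inter> M)) (hgt (L \<inter> {x. Suc x \<in> M}))
     \<le> Max ((\<lambda>M. min (hgt (L \<inter> M)) (hgt (L \<inter> {x. Suc x \<in> M}))) ` Tset L)"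
    using assms by (intro Max_ge img_fin) auto
  then show ?thesis using hgt_unfold[OF assms(1) \<open>L \<noteq> {}\<close>] by linarith
qed

lemma hgt_leI: assumes "finite L" "hgt (L \<inter> Suc ` L) < k"
  "\<And>M. M \<in> Tset L \<Longrightarrow> min (hgt (L \<inter> M)) (hgt (L \<inter> {x. Suc x \<in> M})) < k"
shows "hgt L \<le> k"
proof (cases "L = {}")
  case True then show ?thesis by (simp add: hgt_empty)
next
  case False
  have "Max ((\<lambda>M. min (hgt (L \<inter> M)) (hgt (L \<inter> {x. Suc x \<in> M}))) ` Tset L) < k"
    using assms Tset_ne[OF assms(1) False] img_fin[OF assms(1)] by (subst Max_less_iff) auto
  then show ?thesis using hgt_unfold[OF assms(1) False] assms(2) by linarith
qed

lemma hgt_mono: "finite L \<Longrightarrow> L' \<subseteq> L \<Longrightarrow> hgt L' \<le> hgt L"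
proof (induction "card L" arbitrary: L L' rule: less_induct)
  case less
  show ?case
  proof (cases "L' = L")
    case True then show ?thesis by simp
  next
    case False
    then have ps: "L' \<subset> L" using less.prems by blast
    then have "L \<noteq> {}" by blast
    have fL': "finite L'" using less.prems finite_subset by blast
    have cl: "card L' < card L" using ps less.prems(1) by (simp add: psubset_card_mono)
    show ?thesis
    proof (rule hgt_leI[OF fL'])
      have "card (L \<inter> Suc ` L) < card L"
        using card_inter_shift1_less[OF less.prems(1) \<open>L \<noteq> {}\<close>] by (simp add: shift1)
      then have "hgt (L' \<inter> Suc ` L') \<le> hgt (L \<inter> Suc ` L)"
        using less.hyps[of "L \<inter> Suc ` L" "L' \<inter> Suc ` L'"] less.prems by blast
      then show "hgt (L' \<inter> Suc ` L') < hgt L" using hgt_ge1[OF less.prems(1) \<open>L \<noteq> {}\<close>] by linarith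
    next
      fix M assume M: "M \<in> Tset L'"
      then have MinL: "M \<in> Tset L" using cl unfolding Tset_def shift1
        by (auto simp: card_image)
      have c1: "card (L \<inter> M) < card L" using card_inter_T_less[OF less.prems(1) MinL] .
      have c2: "card (L \<inter> {x. Suc x \<in> M}) < card L"
        using card_inter_Tm1_less[OF less.prems(1) MinL] by (simp add: shiftm1)
      have "hgt (L' \<inter> M) \<le> hgt (L \<inter> M)"
        using less.hyps[OF c1, of "L' \<inter> M"] less.prems by blast
      moreover have "hgt (L' \<inter> {x. Suc x \<in> M}) \<le> hgt (L \<inter> {x. Suc x \<in> M})"
        using less.hyps[OF c2, of "L' \<inter> {x. Suc x \<in> M}"] less.prems by blast
      ultimately show "min (hgt (L' \<inter> M)) (hgt (L' \<inter> {x. Suc x \<in> M})) < hgt L"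
        using hgt_ge2[OF less.prems(1) MinL] by linarith
    qed
  qed
qed

lemma hgt_suc: "finite K \<Longrightarrow> hgt K \<le> hgt (Suc ` K)"
proof (induction "card K" arbitrary: K rule: less_induct)
  case less
  show ?case
  proof (cases "K = {}")
    case True then show ?thesis by (simp add: hgt_empty)
  next
    case False
    have fS: "finite (Suc ` K)" using less.prems by simp
    have neS: "Suc ` K \<noteq> {}" using False by simp
    show ?thesis
    proof (rule hgt_leI[OF less.prems])
      have "card (K \<inter> Suc ` K) < card K"
        using card_inter_shift1_less[OF less.prems False] by (simp add: shift1)
      then have "hgt (K \<inter> Suc ` K) \<le> hgt (Suc ` (K \<inter> Suc ` K))"
        using less.hyps less.prems by simp
      also have "Suc ` (K \<inter> Suc ` K) = Suc ` K \<inter> Suc ` (Suc ` K)" by (simp add: image_Int)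
      finally show "hgt (K \<inter> Suc ` K) < hgt (Suc ` K)" using hgt_ge1[OF fS neS] by linarith
    next
      fix M assume M: "M \<in> Tset K"
      have MS: "Suc ` M \<in> Tset (Suc ` K)" using M unfolding Tset_def shift1
        by (auto simp: card_image inj_image_eq_iff)
      have c1: "card (K \<inter> M) < card K" using card_inter_T_less[OF less.prems M] .
      have c2: "card (K \<inter> {x. Suc x \<in> M}) < card K"
        using card_inter_Tm1_less[OF less.prems M] by (simp add: shiftm1)
      have "hgt (K \<inter> M) \<le> hgt (Suc ` (K \<inter> M))" using less.hyps[OF c1] less.prems by simp
      also have "Suc ` (K \<inter> M) = Suc ` K \<inter> Suc ` M" by (simp add: image_Int)
      finally have h1: "hgt (K \<inter> M) \<le> hgt (Suc ` K \<inter> Suc ` M)" .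
      have "hgt (K \<inter> {x. Suc x \<in> M}) \<le> hgt (Suc ` (K \<inter> {x. Suc x \<in> M}))"
        using less.hyps[OF c2] less.prems by simp
      also have "Suc ` (K \<inter> {x. Suc x \<in> M}) = Suc ` K \<inter> {x. Suc x \<in> Suc ` M}" by auto
      finally have h2: "hgt (K \<inter> {x. Suc x \<in> M}) \<le> hgt (Suc ` K \<inter> {x. Suc x \<in> Suc ` M})" .
      show "min (hgt (K \<inter> M)) (hgt (K \<inter> {x. Suc x \<in> M})) < hgt (Suc ` K)"
        using h1 h2 hgt_ge2[OF fS MS] by linarith
    qed
  qed
qed

lemma hgt_pos: "finite L \<Longrightarrow> L \<noteq> {} \<Longrightarrow> hgt L > 0"
  using hgt_ge1 by fastforce

theorem proposition13:
  fixes L L' :: "nat set" and s :: int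
  assumes "finite L" and "finite L'"
  shows "(hgt L = 0 \<longleftrightarrow> L = {})
       \<and> (L' \<subseteq> L \<longrightarrow> hgt L' \<le> hgt L)
       \<and> (L' \<subseteq> shift L (-1) \<longrightarrow> hgt L' \<le> hgt L)
       \<and> (1 \<le> s \<and> int (hgt L) \<le> s \<and> int (hgt L') \<le> s \<longrightarrow>
            int (hgt (L' \<inter> L)) \<le> s - 1 \<or> int (hgt (L' \<inter> shift L (-1))) \<le> s - 1)"
proof (intro conjI impI)
  show "hgt L = 0 \<longleftrightarrow> L = {}" using hgt_pos[OF assms(1)] hgt_empty by fastforce
  show "L' \<subseteq> L \<Longrightarrow> hgt L' \<le> hgt L" using hgt_mono[OF assms(1)] by blast
  show "hgt L' \<le> hgt L" if "L' \<subseteq> shift L (-1)"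
  proof -
    have "Suc ` L' \<subseteq> L" using that by (auto simp: shiftm1)
    then show ?thesis using hgt_suc[OF assms(2)] hgt_mono[OF assms(1)] by (meson le_trans)
  qed
  assume a: "1 \<le> s \<and> int (hgt L) \<le> s \<and> int (hgt L') \<le> s"
  have "int (hgt (L' \<inter> L)) \<le> s - 1 \<or> int (hgt (L' \<inter> {x. Suc x \<in> L})) \<le> s - 1"
  proof (cases "L = {} \<or> L' = {}")
    case True then show ?thesis using a by (auto simp: hgt_empty)
  next
    case False
    then have ne: "L \<noteq> {}" "L' \<noteq> {}" by auto
    show ?thesis
    proof (cases "L' = L")
      case True
      have "Suc ` (L \<inter> {x. Suc x \<in> L}) \<subseteq> L \<inter> Suc ` L" by auto
      then have "hgt (L \<inter> {x. Suc x \<in> L}) \<le> hgt (L \<inter> Suc ` L)"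
        using hgt_suc[of "L \<inter> {x. Suc x \<in> L}"] hgt_mono[of "L \<inter> Suc ` L"] assms(1)
        by (meson finite_Int le_trans)
      then show ?thesis using True hgt_ge1[OF assms(1) ne(1)] a by simp
    next
      case F1: False
      show ?thesis
      proof (cases "L = Suc ` L'")
        case True
        then show ?thesis using hgt_ge1[OF assms(2) ne(2)] a by simp
      next
        case F2: False
        show ?thesis
        proof (cases "card L' \<le> card L")
          case True
          have "Suc ` L' \<noteq> Suc ` L" using F1 by (auto simp: inj_image_eq_iff)
          then have T: "Suc ` L' \<in> Tset L" using True F1 F2 ne assms unfolding Tset_def shift1
            by (auto simp: card_gt_0_iff card_image)
          have e: "L \<inter> {x. Suc x \<in> Suc ` L'} = L' \<inter> L" by auto
          have "Suc ` (L' \<inter> {x. Suc x \<in> L}) \<subseteq> L \<inter> Suc ` L'" by auto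
          then have "hgt (L' \<inter> {x. Suc x \<in> L}) \<le> hgt (L \<inter> Suc ` L')"
            using hgt_suc[of "L' \<inter> {x. Suc x \<in> L}"] hgt_mono[of "L \<inter> Suc ` L'"] assms
            by (meson finite_Int le_trans)
          then show ?thesis using hgt_ge2[OF assms(1) T] a unfolding e by linarith
        next
          case False
          have "L \<noteq> Suc ` L'" using False by (auto simp: card_image)
          then have "L \<in> Tset L'" using False F1 ne assms unfolding Tset_def shift1
            by (auto simp: card_gt_0_iff)
          then show ?thesis using hgt_ge2[OF assms(2)] a by fastforce
        qed
      qed
    qed
  qed
  then show "int (hgt (L' \<inter> L)) \<le> s - 1 \<or> int (hgt (L' \<inter> shift L (-1))) \<le> s - 1"
    by (simp add: shiftm1)
qed

end
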